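(* Consider a position in the Strong Ramsey game $\mathcal{R}(K_{\aleph_0}^{(3)}, \hat{K}_{2,4}^{(3)})$ in which $P_2$ has claimed all edges of a copy of $\hat{K}_{2,3}^{(3)}$ with main vertices $x,y$ and center $c$, and suppose that (i) $P_1$ does not have a threat; (ii) $P_1$ has not claimed all edges of a copy of $\hat{K}_{2,3}^{(3)}$ whose center is $c$ and one of whose main vertices is $x$; (iii) $P_1$ has not claimed all edges of a copy of $\hat{K}_{2,3}^{(3)}$ whose center is $x$ and one of whose main vertices is $c$. If it is $P_2$'s turn, then $P_2$ has a strategy from this position guaranteeing that $P_1$ never claims all edges of a copy of $\hat{K}_{2,4}^{(3)}$ (a drawing strategy).
   Context: Strong Ramsey game $\mathcal{R}(B,G)$: players $P_1$, $P_2$ alternately claim unclaimed edges of the $k$-uniform hypergraph $B$, $P_1$ first; the first to claim all edges of a copy of the finite $k$-uniform hypergraph $G$ wins; if nobody does so in finitely many moves the game is a draw. $K_{\aleph_0}^{(3)}$ is the complete $3$-uniform hypergraph on a countably infinite vertex set. $\hat{K}_{2,l}$ ($l\ge3$) is $K_{2,l}$ plus the edge joining its two vertices of degree $l$. For a graph $H$, $H^{(3)}$ is the $3$-uniform hypergraph obtained by adding one fixed new vertex $c$ (the center) to every edge of $H$. Main vertices of $\hat{K}_{2,l}^{(3)}$: the two vertices of degree $l+1$ in $\hat K_{2,l}$ (degree at least 3); a copy of $\hat{K}_{2,3}^{(3)}$ "with main vertices $x,y$ and center $c$" is one whose center is $c$ and whose main vertices are $x,y$. $P_1$ has a threat if she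 has claimed all edges of a copy of $\hat{K}_{2,4}^{(3)}$ minus one edge $e$, where the edge of the board corresponding to $e$ is claimed by neither player. *)

theory Defs
  imports Main
begin

text \<open>Board: the complete 3-uniform hypergraph on the countably infinite vertex set nat.
  Its edges are the 3-element subsets of nat.\<close>
definition edge3 :: "nat set \<Rightarrow> bool" where
  "edge3 e \<longleftrightarrow> card e = 3"

text \<open>H^(3): add the fixed new vertex c to every edge of the graph H.\<close>
definition cone :: "'a set set \<Rightarrow> 'a \<Rightarrow> 'a set set" where
  "cone H c = (insert c) ` H"

text \<open>The graph hat K_{2,l}: main vertices 0 and 1 (joined by an edge), the l other
  vertices are 3, ..., l+2, each joined to both 0 and 1. Vertex 2 is kept free for the center.\<close>
definition Khat :: "nat \<Rightarrow> nat set set" where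
  "Khat l = {{0,1}} \<union> (\<lambda>i. {0,i}) ` {3..<l+3} \<union> (\<lambda>i. {1,i}) ` {3..<l+3}"

definition Khat3 :: "nat \<Rightarrow> nat set set" where
  "Khat3 l = cone (Khat l) 2"

definition copy_in :: "(nat \<Rightarrow> nat) \<Rightarrow> nat set set \<Rightarrow> nat set set \<Rightarrow> bool" where
  "copy_in f G X \<longleftrightarrow> inj_on f (\<Union>G) \<and> (image f) ` G \<subseteq> X"

definition has_copy :: "nat set set \<Rightarrow> nat set set \<Rightarrow> bool" where
  "has_copy X G \<longleftrightarrow> (\<exists>f. copy_in f G X)"

text \<open>P1 (owning the edge set A; B owned by P2) has a threat.\<close>
definition threat :: "nat set set \<Rightarrow> nat set set \<Rightarrow> bool" where
  "threat A B \<longleftrightarrow> (\<exists>f e. inj_on f (\<Union>(Khat3 4)) \<and> e \<in> (image f) ` Khat3 4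
      \<and> (image f) ` Khat3 4 - {e} \<subseteq> A \<and> e \<notin> A \<and> e \<notin> B)"

text \<open>Plays from a position (A,B) with P2 to move: m k is the edge claimed at the k-th move
  from that position; even k are P2's moves, odd k are P1's moves.\<close>
definition P1_set :: "nat set set \<Rightarrow> (nat \<Rightarrow> nat set) \<Rightarrow> nat \<Rightarrow> nat set set" where
  "P1_set A m k = A \<union> {m i | i. i < k \<and> odd i}"

definition P2_set :: "nat set set \<Rightarrow> (nat \<Rightarrow> nat set) \<Rightarrow> nat \<Rightarrow> nat set set" where
  "P2_set B m k = B \<union> {m i | i. i < k \<and> even i}"

definition legal :: "nat set set \<Rightarrow> nat set set \<Rightarrow> (nat \<Rightarrow> nat set) \<Rightarrow> nat \<Rightarrow> bool" where
  "legal A B m k \<longleftrightarrow> edge3 (m k) \<and> m k \<notin> A \<and> m k \<notin> B \<and> m k \<notin> m ` {..<k}"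

text \<open>sigma is a (history-dependent) strategy for P2 from position (A,B), P2 to move,
  guaranteeing that P1 never claims all edges of a copy of hat K_{2,4}^(3) while the game is
  running (the game stops as soon as P2 completes a copy first).\<close>
definition P2_drawing_strategy ::
  "nat set set \<Rightarrow> nat set set \<Rightarrow> (nat set list \<Rightarrow> nat set) \<Rightarrow> bool" where
  "P2_drawing_strategy A B \<sigma> \<longleftrightarrow>
    (\<forall>m. (\<forall>k. odd k \<longrightarrow> legal A B m k) \<and> (\<forall>k. even k \<longrightarrow> m k = \<sigma> (map m [0..<k])) \<longrightarrow>
       (\<forall>k. even k \<longrightarrow> legal A B m k) \<and>
       (\<forall>k. has_copy (P1_set A m k) (Khat3 4) \<longrightarrow>
          (\<exists>j\<le>k. has_copy (P2_set B m j) (Khat3 4) \<and> \<not> has_copy (P1_set A m j) (Khat3 4))))"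

end

theory Submission
  imports Defs
begin


definition K4E :: "nat \<Rightarrow> nat \<Rightarrow> nat \<Rightarrow> nat \<Rightarrow> nat \<Rightarrow> nat \<Rightarrow> nat \<Rightarrow> nat set set" where
  "K4E a0 a1 a2 a3 a4 a5 a6 = {{a0,a1,a2},{a0,a2,a3},{a0,a2,a4},{a0,a2,a5},{a0,a2,a6},
     {a1,a2,a3},{a1,a2,a4},{a1,a2,a5},{a1,a2,a6}}"

definition K3E :: "nat \<Rightarrow> nat \<Rightarrow> nat \<Rightarrow> nat \<Rightarrow> nat \<Rightarrow> nat \<Rightarrow> nat set set" where
  "K3E a0 a1 a2 a3 a4 a5 = {{a0,a1,a2},{a0,a2,a3},{a0,a2,a4},{a0,a2,a5},
     {a1,a2,a3},{a1,a2,a4},{a1,a2,a5}}"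

lemma K4_eq: "Khat3 4 = K4E 0 1 2 3 4 5 6"
proof -
  have "{3..<4+3::nat} = {3,4,5,6}" by auto
  then show ?thesis unfolding Khat3_def cone_def Khat_def K4E_def
    by (auto simp: insert_commute)
qed

lemma K3_eq: "Khat3 3 = K3E 0 1 2 3 4 5"
proof -
  have "{3..<3+3::nat} = {3,4,5}" by auto
  then show ?thesis unfolding Khat3_def cone_def Khat_def K3E_def
    by (auto simp: insert_commute)
qed

lemma U4: "\<Union>(Khat3 4) = {0..<7}"
  unfolding K4_eq K4E_def by auto

lemma U3: "\<Union>(Khat3 3) = {0..<6}"
  unfolding K3_eq K3E_def by auto

lemma img4: "(image f) ` Khat3 4 = K4E (f 0) (f 1) (f 2) (f 3) (f 4) (f 5) (f 6)"
  unfolding K4_eq K4E_def by simp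

lemma img3: "(image f) ` Khat3 3 = K3E (f 0) (f 1) (f 2) (f 3) (f 4) (f 5)"
  unfolding K3_eq K3E_def by simp

lemma inj7: "inj_on f {0..<7::nat} \<longleftrightarrow> distinct [f 0, f 1, f 2, f 3, f 4, f 5, f (6::nat)]"
proof -
  have "inj_on f {0..<7} \<longleftrightarrow> distinct (map f [0..<7])"
    by (simp add: distinct_map)
  also have "[0..<7] = [0,1,2,3,4,5,6::nat]" by (simp add: upt_rec)
  finally show ?thesis by simp
qed

lemma inj6: "inj_on f {0..<6::nat} \<longleftrightarrow> distinct [f 0, f 1, f 2, f 3, f 4, f (5::nat)]"
proof -
  have "inj_on f {0..<6} \<longleftrightarrow> distinct (map f [0..<6])"
    by (simp add: distinct_map)
  also have "[0..<6] = [0,1,2,3,4,5::nat]" by (simp add: upt_rec)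
  finally show ?thesis by simp
qed

lemma copy4_iff: "copy_in f (Khat3 4) X \<longleftrightarrow>
   distinct [f 0, f 1, f 2, f 3, f 4, f 5, f 6] \<and> K4E (f 0) (f 1) (f 2) (f 3) (f 4) (f 5) (f 6) \<subseteq> X"
  unfolding copy_in_def U4 img4 inj7 ..

lemma copy3_iff: "copy_in f (Khat3 3) X \<longleftrightarrow>
   distinct [f 0, f 1, f 2, f 3, f 4, f 5] \<and> K3E (f 0) (f 1) (f 2) (f 3) (f 4) (f 5) \<subseteq> X"
  unfolding copy_in_def U3 img3 inj6 ..

lemma K3_copy:
  assumes "distinct [b0,b1,b2,b3,b4,b5]" "K3E b0 b1 b2 b3 b4 b5 \<subseteq> X"
  shows "\<exists>f. copy_in f (Khat3 3) X \<and> f 0 = b0 \<and> f 1 = b1 \<and> f 2 = b2"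
proof -
  let ?f = "\<lambda>n. [b0,b1,b2,b3,b4,b5] ! n"
  have "copy_in ?f (Khat3 3) X" unfolding copy3_iff using assms by simp
  then show ?thesis by force
qed

lemma K4_copy:
  assumes "distinct [b0,b1,b2,b3,b4,b5,b6]" "K4E b0 b1 b2 b3 b4 b5 b6 \<subseteq> X"
  shows "has_copy X (Khat3 4)"
proof -
  let ?f = "\<lambda>n. [b0,b1,b2,b3,b4,b5,b6] ! n"
  have "copy_in ?f (Khat3 4) X" unfolding copy4_iff using assms by simp
  then show ?thesis unfolding has_copy_def by blast
qed


lemma st:
  assumes "s \<in> insert e (A \<union> (\<lambda>z. {c,x,z}) ` Z)" "s \<noteq> e" "z \<in> Z" "z \<in> s"
    "Z \<inter> \<Union>A = {}" "c \<notin> Z" "x \<notin> Z"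
  shows "s = {c,x,z}"
  using assms by auto

lemma st':
  assumes "s \<in> insert e (A \<union> (\<lambda>z. {c,x,z}) ` Z)" "z \<in> Z" "z \<in> s"
    "Z \<inter> \<Union>A = {}" "c \<notin> Z" "x \<notin> Z"
  shows "s = e \<or> s = {c,x,z}"
  using assms by auto

lemma inA:
  assumes "s \<in> insert e (A \<union> (\<lambda>z. {c,x,z}) ` Z)" "s \<noteq> e" "s \<inter> Z = {}"
  shows "s \<in> A"
  using assms by auto


lemma ne3: "distinct [a0,a1,a2,a3,a4,a5,a6::nat] \<Longrightarrow> {a0,a2,a3} \<noteq> {a0,a2,a4}"
  "distinct [a0,a1,a2,a3,a4,a5,a6::nat] \<Longrightarrow> {a0,a2,a3} \<noteq> {a0,a2,a5}"
  "distinct [a0,a1,a2,a3,a4,a5,a6::nat] \<Longrightarrow> {a0,a2,a4} \<noteq> {a0,a2,a5}"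
  "distinct [a0,a1,a2,a3,a4,a5,a6::nat] \<Longrightarrow> {a1,a2,a3} \<noteq> {a1,a2,a4}"
  "distinct [a0,a1,a2,a3,a4,a5,a6::nat] \<Longrightarrow> {a1,a2,a3} \<noteq> {a1,a2,a5}"
  "distinct [a0,a1,a2,a3,a4,a5,a6::nat] \<Longrightarrow> {a1,a2,a4} \<noteq> {a1,a2,a5}"
  "distinct [a0,a1,a2,a3,a4,a5,a6::nat] \<Longrightarrow> {a0,a2,a3} \<noteq> {a1,a2,a3}"
  by (auto dest!: equalityD1 simp: insert_subset)

lemma three: "(t3::'a) = e \<or> t3 = k \<Longrightarrow> t4 = e \<or> t4 = k \<Longrightarrow> t5 = e \<or> t5 = k \<Longrightarrow> t3 \<noteq> t4 \<Longrightarrow> t3 \<noteq> t5 \<Longrightarrow> t4 \<noteq> t5 \<Longrightarrow> False"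
  by blast

lemma two: "(t3::'a) = e \<or> t3 = k \<Longrightarrow> t4 = e \<or> t4 = k \<Longrightarrow> t3 \<noteq> t4 \<Longrightarrow> (e = t3 \<and> t4 = k) \<or> (e = t4 \<and> t3 = k)"
  by blast

lemma hub:
  assumes d: "distinct [a0,a1,a2,a3,a4,a5,a6]"
  and sub: "K4E a0 a1 a2 a3 a4 a5 a6 \<subseteq> insert e (A \<union> (\<lambda>z. {c,x,z}) ` Z)"
  and Z: "Z \<inter> \<Union>A = {}" "c \<notin> Z" "x \<notin> Z"
  shows "a0 \<notin> Z \<and> a1 \<notin> Z \<and> a2 \<notin> Z"
proof -
  have S: "\<And>s z. s \<in> K4E a0 a1 a2 a3 a4 a5 a6 \<Longrightarrow> z \<in> Z \<Longrightarrow> z \<in> s \<Longrightarrow> s = e \<or> s = {c,x,z}"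
    using st'[OF subsetD[OF sub] _ _ Z] by this
  note E = ne3[OF d]
  note E1 = ne3(1-3)[OF d]
  note E2 = ne3(4-6)[OF d]
  have M: "{a0,a2,a3} \<in> K4E a0 a1 a2 a3 a4 a5 a6" "{a0,a2,a4} \<in> K4E a0 a1 a2 a3 a4 a5 a6"
     "{a0,a2,a5} \<in> K4E a0 a1 a2 a3 a4 a5 a6" "{a1,a2,a3} \<in> K4E a0 a1 a2 a3 a4 a5 a6"
     "{a1,a2,a4} \<in> K4E a0 a1 a2 a3 a4 a5 a6" "{a1,a2,a5} \<in> K4E a0 a1 a2 a3 a4 a5 a6"
    by (auto simp: K4E_def)
  have "a0 \<notin> Z"
  proof
    assume z: "a0 \<in> Z"
    have "{a0,a2,a3} = e \<or> {a0,a2,a3} = {c,x,a0}" "{a0,a2,a4} = e \<or> {a0,a2,a4} = {c,x,a0}"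
      "{a0,a2,a5} = e \<or> {a0,a2,a5} = {c,x,a0}"
      using S[OF M(1) z] S[OF M(2) z] S[OF M(3) z] by simp_all
    then show False using E1 by (rule three)
  qed
  moreover have "a2 \<notin> Z"
  proof
    assume z: "a2 \<in> Z"
    have "{a0,a2,a3} = e \<or> {a0,a2,a3} = {c,x,a2}" "{a0,a2,a4} = e \<or> {a0,a2,a4} = {c,x,a2}"
      "{a0,a2,a5} = e \<or> {a0,a2,a5} = {c,x,a2}"
      using S[OF M(1) z] S[OF M(2) z] S[OF M(3) z] by simp_all
    then show False using E1 by (rule three)
  qed
  moreover have "a1 \<notin> Z"
  proof
    assume z: "a1 \<in> Z"
    have "{a1,a2,a3} = e \<or> {a1,a2,a3} = {c,x,a1}" "{a1,a2,a4} = e \<or> {a1,a2,a4} = {c,x,a1}"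
      "{a1,a2,a5} = e \<or> {a1,a2,a5} = {c,x,a1}"
      using S[OF M(4) z] S[OF M(5) z] S[OF M(6) z] by simp_all
    then show False using E2 by (rule three)
  qed
  ultimately show ?thesis by blast
qed

lemma leaf:
  assumes d: "distinct [a0,a1,a2,a3,a4,a5,a6]"
  and sub: "K4E a0 a1 a2 a3 a4 a5 a6 \<subseteq> insert e (A \<union> (\<lambda>z. {c,x,z}) ` Z)"
  and Z: "Z \<inter> \<Union>A = {}" "c \<notin> Z" "x \<notin> Z"
  and z: "a3 \<in> Z"
  shows "(e = {a0,a2,a3} \<and> {a1,a2,a3} = {c,x,a3}) \<or> (e = {a1,a2,a3} \<and> {a0,a2,a3} = {c,x,a3})"
proof -
  have S: "\<And>s z. s \<in> K4E a0 a1 a2 a3 a4 a5 a6 \<Longrightarrow> z \<in> Z \<Longrightarrow> z \<in> s \<Longrightarrow> s = e \<or> s = {c,x,z}"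
    using st'[OF subsetD[OF sub] _ _ Z] by this
  note E = ne3(7)[OF d]
  have M: "{a0,a2,a3} \<in> K4E a0 a1 a2 a3 a4 a5 a6" "{a1,a2,a3} \<in> K4E a0 a1 a2 a3 a4 a5 a6"
    by (auto simp: K4E_def)
  have "{a0,a2,a3} = e \<or> {a0,a2,a3} = {c,x,a3}" "{a1,a2,a3} = e \<or> {a1,a2,a3} = {c,x,a3}"
    using S[OF M(1) z] S[OF M(2) z] by simp_all
  then show ?thesis using E by (rule two)
qed

lemma perm4: "K4E a0 a1 a2 a4 a3 a5 a6 = K4E a0 a1 a2 a3 a4 a5 a6"
  "K4E a0 a1 a2 a5 a4 a3 a6 = K4E a0 a1 a2 a3 a4 a5 a6"
  "K4E a0 a1 a2 a6 a4 a5 a3 = K4E a0 a1 a2 a3 a4 a5 a6"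
  unfolding K4E_def by (simp_all add: insert_commute)


lemma swap3: "{p,q,r} = {c,x,r} \<Longrightarrow> r \<notin> {c,x} \<Longrightarrow> c \<noteq> x \<Longrightarrow> (q = c \<and> p = x) \<or> (q = x \<and> p = c)"
  by (auto dest!: equalityD1 equalityD2 simp: insert_subset)

lemma K3sub: "s \<in> K3E a0 a1 a2 a4 a5 a6 \<Longrightarrow> s \<in> K4E a0 a1 a2 a3 a4 a5 a6 \<and> s \<subseteq> {a0,a1,a2,a4,a5,a6}"
  unfolding K3E_def K4E_def by auto

lemma K4vs: "s \<in> K4E a0 a1 a2 a3 a4 a5 a6 \<Longrightarrow> s \<subseteq> {a0,a1,a2,a3,a4,a5,a6}"
  unfolding K4E_def by auto

lemma leafcase:
  assumes d: "distinct [a0,a1,a2,a3,a4,a5,a6]"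
  and sub: "K4E a0 a1 a2 a3 a4 a5 a6 \<subseteq> insert e (A \<union> (\<lambda>z. {c,x,z}) ` Z)"
  and Z: "Z \<inter> \<Union>A = {}" "c \<notin> Z" "x \<notin> Z"
  and cx: "c \<noteq> x"
  and ii: "\<And>b0 b1 b2 b3 b4 b5. distinct [b0,b1,b2,b3,b4,b5] \<Longrightarrow> K3E b0 b1 b2 b3 b4 b5 \<subseteq> A \<Longrightarrow> b2 = c \<Longrightarrow> x \<in> {b0,b1} \<Longrightarrow> False"
  and iii: "\<And>b0 b1 b2 b3 b4 b5. distinct [b0,b1,b2,b3,b4,b5] \<Longrightarrow> K3E b0 b1 b2 b3 b4 b5 \<subseteq> A \<Longrightarrow> b2 = x \<Longrightarrow> c \<in> {b0,b1} \<Longrightarrow> False"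
  and z: "a3 \<in> Z" and n: "a4 \<notin> Z" "a5 \<notin> Z" "a6 \<notin> Z"
  shows False
proof -
  have L: "(e = {a0,a2,a3} \<and> {a1,a2,a3} = {c,x,a3}) \<or> (e = {a1,a2,a3} \<and> {a0,a2,a3} = {c,x,a3})"
    by (rule leaf[OF d sub Z z])
  have h: "a0 \<notin> Z" "a1 \<notin> Z" "a2 \<notin> Z" using hub[OF d sub Z] by simp_all
  have a3e: "a3 \<in> e" using L by auto
  have K3: "K3E a0 a1 a2 a4 a5 a6 \<subseteq> A"
  proof
    fix s assume s: "s \<in> K3E a0 a1 a2 a4 a5 a6"
    have s1: "s \<in> K4E a0 a1 a2 a3 a4 a5 a6" and s2: "s \<subseteq> {a0,a1,a2,a4,a5,a6}"
      using K3sub[OF s] by simp_all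
    have "a3 \<notin> s" using s2 d by auto
    then have "s \<noteq> e" using a3e by auto
    moreover have "s \<inter> Z = {}" using s2 h n by auto
    ultimately show "s \<in> A" using inA[OF subsetD[OF sub s1]] by simp
  qed
  have dd: "distinct [a0,a1,a2,a4,a5,a6]" using d by simp
  have r: "a3 \<notin> {c,x}" using z Z by auto
  from L have "(a2 = c \<and> x \<in> {a0,a1}) \<or> (a2 = x \<and> c \<in> {a0,a1})"
  proof
    assume "e = {a0,a2,a3} \<and> {a1,a2,a3} = {c,x,a3}"
    then have "{a1,a2,a3} = {c,x,a3}" by simp
    from swap3[OF this r cx] show ?thesis by auto
  next
    assume "e = {a1,a2,a3} \<and> {a0,a2,a3} = {c,x,a3}"
    then have "{a0,a2,a3} = {c,x,a3}" by simp
    from swap3[OF this r cx] show ?thesis by auto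
  qed
  then show False using ii[OF dd K3] iii[OF dd K3] by blast
qed

lemma twoleaves:
  assumes d: "distinct [a0,a1,a2,a3,a4,a5,a6]"
  and sub: "K4E a0 a1 a2 a3 a4 a5 a6 \<subseteq> insert e (A \<union> (\<lambda>z. {c,x,z}) ` Z)"
  and Z: "Z \<inter> \<Union>A = {}" "c \<notin> Z" "x \<notin> Z"
  and z: "a3 \<in> Z" "a4 \<in> Z"
  shows False
proof -
  have L1: "e = {a0,a2,a3} \<or> e = {a1,a2,a3}" using leaf[OF d sub Z z(1)] by blast
  have d': "distinct [a0,a1,a2,a4,a3,a5,a6]" using d by auto
  have sub': "K4E a0 a1 a2 a4 a3 a5 a6 \<subseteq> insert e (A \<union> (\<lambda>z. {c,x,z}) ` Z)"
    using sub perm4(1) by simp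
  have L2: "e = {a0,a2,a4} \<or> e = {a1,a2,a4}" using leaf[OF d' sub' Z z(2)] by blast
  have "a4 \<notin> e" using L1 d by auto
  moreover have "a4 \<in> e" using L2 by auto
  ultimately show False by simp
qed

lemma core:
  fixes a0 a1 a2 a3 a4 a5 a6 c x :: nat
  assumes d: "distinct [a0,a1,a2,a3,a4,a5,a6]"
  and sub: "K4E a0 a1 a2 a3 a4 a5 a6 \<subseteq> insert e (A \<union> (\<lambda>z. {c,x,z}) ` Z)"
  and Z: "Z \<inter> \<Union>A = {}" "c \<notin> Z" "x \<notin> Z"
  and cx: "c \<noteq> x"
  and noA: "\<not> K4E a0 a1 a2 a3 a4 a5 a6 \<subseteq> A"
  and nothr: "e \<in> K4E a0 a1 a2 a3 a4 a5 a6 \<Longrightarrow> K4E a0 a1 a2 a3 a4 a5 a6 - {e} \<subseteq> A \<Longrightarrow> False"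
  and ii: "\<And>b0 b1 b2 b3 b4 b5. distinct [b0,b1,b2,b3,b4,b5] \<Longrightarrow> K3E b0 b1 b2 b3 b4 b5 \<subseteq> A \<Longrightarrow> b2 = c \<Longrightarrow> x \<in> {b0,b1} \<Longrightarrow> False"
  and iii: "\<And>b0 b1 b2 b3 b4 b5. distinct [b0,b1,b2,b3,b4,b5] \<Longrightarrow> K3E b0 b1 b2 b3 b4 b5 \<subseteq> A \<Longrightarrow> b2 = x \<Longrightarrow> c \<in> {b0,b1} \<Longrightarrow> False"
  shows False
proof -
  have h: "a0 \<notin> Z" "a1 \<notin> Z" "a2 \<notin> Z" using hub[OF d sub Z] by simp_all
  have p1: "K4E a0 a1 a2 a3 a5 a4 a6 = K4E a0 a1 a2 a3 a4 a5 a6"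
    unfolding K4E_def by (simp add: insert_commute)
  have p2: "K4E a0 a1 a2 a3 a6 a5 a4 = K4E a0 a1 a2 a3 a4 a5 a6"
    unfolding K4E_def by (simp add: insert_commute)
  have p3: "K4E a0 a1 a2 a4 a5 a3 a6 = K4E a0 a1 a2 a3 a4 a5 a6"
    unfolding K4E_def by (simp add: insert_commute)
  have p4: "K4E a0 a1 a2 a4 a6 a5 a3 = K4E a0 a1 a2 a3 a4 a5 a6"
    unfolding K4E_def by (simp add: insert_commute)
  have p5: "K4E a0 a1 a2 a5 a6 a3 a4 = K4E a0 a1 a2 a3 a4 a5 a6"
    unfolding K4E_def by (simp add: insert_commute)
  have p6: "K4E a0 a1 a2 a4 a3 a5 a6 = K4E a0 a1 a2 a3 a4 a5 a6"
    unfolding K4E_def by (simp add: insert_commute)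
  have p7: "K4E a0 a1 a2 a5 a3 a4 a6 = K4E a0 a1 a2 a3 a4 a5 a6"
    unfolding K4E_def by (simp add: insert_commute)
  have p8: "K4E a0 a1 a2 a6 a3 a4 a5 = K4E a0 a1 a2 a3 a4 a5 a6"
    unfolding K4E_def by (simp add: insert_commute)
  note subs = sub[folded p1] sub[folded p2] sub[folded p3] sub[folded p4] sub[folded p5]
    sub[folded p6] sub[folded p7] sub[folded p8]
  have ds: "distinct [a0,a1,a2,a3,a5,a4,a6]" "distinct [a0,a1,a2,a3,a6,a5,a4]"
    "distinct [a0,a1,a2,a4,a5,a3,a6]" "distinct [a0,a1,a2,a4,a6,a5,a3]"
    "distinct [a0,a1,a2,a5,a6,a3,a4]" "distinct [a0,a1,a2,a4,a3,a5,a6]"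
    "distinct [a0,a1,a2,a5,a3,a4,a6]" "distinct [a0,a1,a2,a6,a3,a4,a5]"
    using d by auto
  show False
  proof (cases "a3 \<in> Z")
    case True
    have q: "a4 \<notin> Z" "a5 \<notin> Z" "a6 \<notin> Z"
      using twoleaves[OF d sub Z True] twoleaves[OF ds(1) subs(1) Z True]
        twoleaves[OF ds(2) subs(2) Z True] by blast+
    show False by (rule leafcase[OF d sub Z cx]) (fact ii iii True q)+
  next
    case n3: False
    show False
    proof (cases "a4 \<in> Z")
      case True
      have q: "a5 \<notin> Z" "a6 \<notin> Z"
        using twoleaves[OF ds(3) subs(3) Z True] twoleaves[OF ds(4) subs(4) Z True] by blast+
      show False by (rule leafcase[OF ds(6) subs(6) Z cx]) (fact ii iii True n3 q)+
    next
      case n4: False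
      show False
      proof (cases "a5 \<in> Z")
        case True
        have q: "a6 \<notin> Z" using twoleaves[OF ds(5) subs(5) Z True] by blast
        show False by (rule leafcase[OF ds(7) subs(7) Z cx]) (fact ii iii True n3 n4 q)+
      next
        case n5: False
        show False
        proof (cases "a6 \<in> Z")
          case True
          show False by (rule leafcase[OF ds(8) subs(8) Z cx]) (fact ii iii True n3 n4 n5)+
        next
          case n6: False
          have all: "s \<in> A" if s: "s \<in> K4E a0 a1 a2 a3 a4 a5 a6" "s \<noteq> e" for s
          proof -
            have "s \<inter> Z = {}" using K4vs[OF s(1)] h n3 n4 n5 n6 by auto
            then show ?thesis using inA[OF subsetD[OF sub s(1)] s(2)] by simp
          qed
          show False
          proof (cases "e \<in> K4E a0 a1 a2 a3 a4 a5 a6")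
            case True
            have "K4E a0 a1 a2 a3 a4 a5 a6 - {e} \<subseteq> A" using all by blast
            then show False using nothr True by blast
          next
            case False
            then have "K4E a0 a1 a2 a3 a4 a5 a6 \<subseteq> A" using all by blast
            then show False using noA by blast
          qed
        qed
      qed
    qed
  qed
qed


lemma nocopy:
  assumes Z: "Z \<inter> \<Union>A = {}" "c \<notin> Z" "x \<notin> Z" and cx: "c \<noteq> x"
  and eA: "e \<notin> A" "e \<notin> B"
  and running: "\<not> has_copy A (Khat3 4)" and i: "\<not> threat A B"
  and ii: "\<not> (\<exists>f. copy_in f (Khat3 3) A \<and> f 2 = c \<and> x \<in> {f 0, f 1})"
  and iii: "\<not> (\<exists>f. copy_in f (Khat3 3) A \<and> f 2 = x \<and> c \<in> {f 0, f 1})"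
  shows "\<not> has_copy (insert e (A \<union> (\<lambda>z. {c,x,z}) ` Z)) (Khat3 4)"
proof
  assume "has_copy (insert e (A \<union> (\<lambda>z. {c,x,z}) ` Z)) (Khat3 4)"
  then obtain f where cf: "copy_in f (Khat3 4) (insert e (A \<union> (\<lambda>z. {c,x,z}) ` Z))"
    unfolding has_copy_def by blast
  then have d: "distinct [f 0, f 1, f 2, f 3, f 4, f 5, f 6]"
    and sub: "K4E (f 0) (f 1) (f 2) (f 3) (f 4) (f 5) (f 6) \<subseteq> insert e (A \<union> (\<lambda>z. {c,x,z}) ` Z)"
    unfolding copy4_iff by simp_all
  show False
  proof (rule core[OF d sub Z cx])
    show "\<not> K4E (f 0) (f 1) (f 2) (f 3) (f 4) (f 5) (f 6) \<subseteq> A"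
    proof
      assume "K4E (f 0) (f 1) (f 2) (f 3) (f 4) (f 5) (f 6) \<subseteq> A"
      then have "copy_in f (Khat3 4) A" unfolding copy4_iff using d by simp
      then show False using running unfolding has_copy_def by blast
    qed
  next
    assume e1: "e \<in> K4E (f 0) (f 1) (f 2) (f 3) (f 4) (f 5) (f 6)"
      and e2: "K4E (f 0) (f 1) (f 2) (f 3) (f 4) (f 5) (f 6) - {e} \<subseteq> A"
    have "inj_on f (\<Union>(Khat3 4))" using cf unfolding copy_in_def by simp
    moreover have "e \<in> (image f) ` Khat3 4" using e1 unfolding img4 .
    moreover have "(image f) ` Khat3 4 - {e} \<subseteq> A" using e2 unfolding img4 .
    ultimately have "threat A B" unfolding threat_def using eA by blast
    then show False using i by simp
  next
    fix b0 b1 b2 b3 b4 b5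
    assume "distinct [b0, b1, b2, b3, b4, b5]" "K3E b0 b1 b2 b3 b4 b5 \<subseteq> A" "b2 = c" "x \<in> {b0, b1}"
    then show False using K3_copy[of b0 b1 b2 b3 b4 b5 A] ii by metis
  next
    fix b0 b1 b2 b3 b4 b5
    assume "distinct [b0, b1, b2, b3, b4, b5]" "K3E b0 b1 b2 b3 b4 b5 \<subseteq> A" "b2 = x" "c \<in> {b0, b1}"
    then show False using K3_copy[of b0 b1 b2 b3 b4 b5 A] iii by metis
  qed
qed



definition fresh :: "nat set \<Rightarrow> nat set list \<Rightarrow> nat" where
  "fresh V h = Suc (Max (V \<union> \<Union>(set h)))"

definition strat :: "nat set set \<Rightarrow> nat set set \<Rightarrow> nat \<Rightarrow> nat \<Rightarrow> nat \<Rightarrow> nat set list \<Rightarrow> nat set" where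
  "strat A B c x y h = (let k = length h; T = insert x (h ! (k-2) - {y}) in
    if 2 \<le> k \<and> T \<notin> A \<and> T \<notin> B \<and> T \<notin> set h \<and> card T = 3 then T
    else {c, y, fresh (\<Union>(A \<union> B) \<union> {c,x,y}) h})"

lemma Suc_Max_notin: "finite S \<Longrightarrow> Suc (Max S) \<notin> S"
  using Max_ge by (metis Suc_n_not_le_n)

lemma has_copy_mono: "has_copy X G \<Longrightarrow> X \<subseteq> Y \<Longrightarrow> has_copy Y G"
  unfolding has_copy_def copy_in_def by (meson subset_trans)

lemma P1_set_mono: "k \<le> j \<Longrightarrow> P1_set A m k \<subseteq> P1_set A m j"
  unfolding P1_set_def by fastforce

lemma edge3_finite: "edge3 e \<Longrightarrow> finite e"
  unfolding edge3_def by (simp add: card_ge_0_finite)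

lemma card3: "a \<noteq> b \<Longrightarrow> a \<noteq> d \<Longrightarrow> b \<noteq> d \<Longrightarrow> card {a,b,d} = 3"
  by simp


lemma fresh_notin:
  assumes "finite V" "\<forall>e\<in>set h. finite e"
  shows "fresh V h \<notin> V" "\<forall>e\<in>set h. fresh V h \<notin> e"
proof -
  have "finite (V \<union> \<Union>(set h))" using assms by auto
  then have "fresh V h \<notin> V \<union> \<Union>(set h)" unfolding fresh_def by (rule Suc_Max_notin)
  then show "fresh V h \<notin> V" "\<forall>e\<in>set h. fresh V h \<notin> e" by auto
qed

lemma if_fin: "(P \<Longrightarrow> card T = 3) \<Longrightarrow> finite S \<Longrightarrow> finite (if P then T else S)"
  by (metis card.infinite zero_neq_numeral)

lemma strat_finite: "finite (strat A B c x y h)"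
  unfolding strat_def Let_def by (rule if_fin) simp_all


lemma K4E_split: "K4E a0 a1 a2 a3 a4 a5 a6 = insert {a0,a2,a6} (insert {a1,a2,a6} (K3E a0 a1 a2 a3 a4 a5))"
  unfolding K4E_def K3E_def by (simp add: insert_commute)

lemma K3E_verts: "{a0,a1,a2,a3,a4,a5} \<subseteq> \<Union>(K3E a0 a1 a2 a3 a4 a5)"
  unfolding K3E_def by auto

lemma first_fail: "N 0 \<Longrightarrow> \<not> N k \<Longrightarrow> \<exists>j. N j \<and> \<not> N (Suc j)"
  by (induction k) blast+

theorem lemma3p2:
  fixes A B :: "nat set set" and x y c :: nat
  assumes pos: "finite A" "finite B" "A \<inter> B = {}" "\<forall>e\<in>A \<union> B. edge3 e"
    and turn: "card A = card B + 1"
    and running: "\<not> has_copy A (Khat3 4)" "\<not> has_copy B (Khat3 4)"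
    and P2copy: "\<exists>f. copy_in f (Khat3 3) B \<and> f 2 = c \<and> {f 0, f 1} = {x, y}"
    and i: "\<not> threat A B"
    and ii: "\<not> (\<exists>f. copy_in f (Khat3 3) A \<and> f 2 = c \<and> x \<in> {f 0, f 1})"
    and iii: "\<not> (\<exists>f. copy_in f (Khat3 3) A \<and> f 2 = x \<and> c \<in> {f 0, f 1})"
  shows "\<exists>\<sigma>. P2_drawing_strategy A B \<sigma>"
proof -
  from P2copy obtain g where g: "copy_in g (Khat3 3) B" "g 2 = c" "{g 0, g 1} = {x,y}" by blast
  have gd: "distinct [g 0, g 1, g 2, g 3, g 4, g 5]"
    and gB: "K3E (g 0) (g 1) (g 2) (g 3) (g 4) (g 5) \<subseteq> B"
    using g(1) unfolding copy3_iff by simp_all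
  have gxy: "(g 0 = x \<and> g 1 = y) \<or> (g 0 = y \<and> g 1 = x)" using g(3) by (simp add: doubleton_eq_iff)
  have cxy: "c \<noteq> x" "c \<noteq> y" "x \<noteq> y" using gd g(2) gxy by auto
  define V where "V = \<Union>(A \<union> B) \<union> {c,x,y}"
  have finV: "finite V" unfolding V_def using pos edge3_finite by auto
  define \<sigma> where "\<sigma> = strat A B c x y"
  show ?thesis
  proof (intro exI[of _ \<sigma>], unfold P2_drawing_strategy_def, intro allI impI)
    fix m assume asm: "(\<forall>k. odd k \<longrightarrow> legal A B m k) \<and> (\<forall>k. even k \<longrightarrow> m k = \<sigma> (map m [0..<k]))"
    then have oddL: "\<And>k. odd k \<Longrightarrow> legal A B m k"
      and evS: "\<And>k. even k \<Longrightarrow> m k = \<sigma> (map m [0..<k])" by auto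
    define H where "H k = map m [0..<k]" for k
    define zz where "zz k = fresh V (H k)" for k
    have setH: "set (H k) = m ` {..<k}" for k unfolding H_def by auto
    have lenH: "length (H k) = k" for k unfolding H_def by simp
    have nthH: "j < k \<Longrightarrow> H k ! j = m j" for j k unfolding H_def by simp
    have finm: "finite (m i)" for i
    proof (cases "even i")
      case True then show ?thesis using evS[OF True] strat_finite unfolding \<sigma>_def by simp
    next
      case False then show ?thesis using oddL[of i] edge3_finite unfolding legal_def by simp
    qed
    have zzV: "zz k \<notin> V" and zzm: "\<forall>e\<in>set (H k). zz k \<notin> e" for k
      using fresh_notin[OF finV, of "H k"] finm unfolding zz_def setH by auto
    have zzm': "i < k \<Longrightarrow> zz k \<notin> m i" for i k using zzm[of k] unfolding setH by auto
    have zzA: "zz k \<notin> \<Union>A" "zz k \<notin> \<Union>B" "zz k \<noteq> c" "zz k \<noteq> x" "zz k \<noteq> y" for k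
      using zzV[of k] unfolding V_def by auto
    define T where "T k = insert x (m (k-2) - {y})" for k
    have strat_eq: "m k = (if 2 \<le> k \<and> T k \<notin> A \<and> T k \<notin> B \<and> T k \<notin> m ` {..<k} \<and> card (T k) = 3
        then T k else {c,y,zz k})" if ev: "even k" for k
    proof (cases "2 \<le> k")
      case True
      have "H k ! (k - 2) = m (k-2)" using True by (intro nthH) simp
      then show ?thesis using evS[OF ev] True unfolding \<sigma>_def strat_def Let_def T_def
        H_def[symmetric] lenH setH zz_def V_def by simp
    next
      case False
      then show ?thesis using evS[OF ev] unfolding \<sigma>_def strat_def Let_def
        H_def[symmetric] lenH zz_def V_def by simp
    qed
    have legE: "legal A B m k" if ev: "even k" for k
    proof (cases "2 \<le> k \<and> T k \<notin> A \<and> T k \<notin> B \<and> T k \<notin> m ` {..<k} \<and> card (T k) = 3")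
      case True
      then have "m k = T k" using strat_eq[OF ev] by simp
      then show ?thesis using True unfolding legal_def edge3_def by simp
    next
      case False
      have mk: "m k = {c,y,zz k}" using strat_eq[OF ev] if_not_P[OF False] by metis
      have "card {c,y,zz k} = 3" using cxy zzA(3)[of k] zzA(5)[of k] by (intro card3) auto
      moreover have "{c,y,zz k} \<notin> A" using zzA(1)[of k] by blast
      moreover have "{c,y,zz k} \<notin> B" using zzA(2)[of k] by blast
      moreover have "{c,y,zz k} \<notin> m ` {..<k}" using zzm'[of _ k] by blast
      ultimately show ?thesis unfolding legal_def edge3_def mk by simp
    qed
    define N where "N k \<longleftrightarrow> (\<forall>i<k. m i = (if even i then {c,y,zz i} else {c,x,zz (i-1)}))" for k
    have stepN: "m k = {c,y,zz k}" if ev: "even k" and Nk: "N k" for k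
    proof (cases "k = 0")
      case True then show ?thesis using strat_eq[OF ev] by simp
    next
      case False
      then have k2: "2 \<le> k" using ev by presburger
      have a2: "k - 2 < k" "even (k-2)" using k2 ev by auto
      have m2: "m (k-2) = {c,y,zz (k-2)}" using Nk[unfolded N_def, rule_format, OF a2(1)] a2(2) by simp
      have "odd (k-1)" using ev k2 by presburger
      moreover have "k - 1 < k" using k2 by simp
      moreover have "k - 1 - 1 = k - 2" by simp
      ultimately have m1: "m (k-1) = {c,x,zz (k-2)}" using Nk[unfolded N_def, rule_format, of "k-1"] by simp
      have "T k = {c,x,zz (k-2)}" unfolding T_def m2 using cxy zzA(5)[of "k-2"] by auto
      then have "T k \<in> m ` {..<k}" using m1 \<open>k - 1 < k\<close> by auto
      then show ?thesis using strat_eq[OF ev] by simp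
    qed
    have noZ: "range zz \<inter> \<Union>A = {}" "c \<notin> range zz" "x \<notin> range zz"
      using zzA by (blast, metis imageE, metis imageE)
    have nocp: "\<not> has_copy (insert e (A \<union> (\<lambda>z. {c,x,z}) ` range zz)) (Khat3 4)"
      if "e \<notin> A" "e \<notin> B" for e
      by (rule nocopy[OF noZ cxy(1) that running(1) i ii iii])
    have emp: "{} \<notin> A" "{} \<notin> B" using pos(4) unfolding edge3_def by force+
    show "(\<forall>k::nat. even k \<longrightarrow> legal A B m k) \<and>
       (\<forall>k::nat. has_copy (P1_set A m k) (Khat3 4) \<longrightarrow>
          (\<exists>j\<le>k. has_copy (P2_set B m j) (Khat3 4) \<and> \<not> has_copy (P1_set A m j) (Khat3 4)))"
    proof (intro conjI allI impI)
      fix k :: nat assume "even k" then show "legal A B m k" by (rule legE)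
    next
      fix k :: nat assume hk: "has_copy (P1_set A m k) (Khat3 4)"
      show "\<exists>j\<le>k. has_copy (P2_set B m j) (Khat3 4) \<and> \<not> has_copy (P1_set A m j) (Khat3 4)"
      proof (cases "\<forall>k. N k")
        case True
        have "P1_set A m k \<subseteq> insert {} (A \<union> (\<lambda>z. {c,x,z}) ` range zz)"
        proof
          fix s assume "s \<in> P1_set A m k"
          then consider "s \<in> A" | i where "i < k" "odd i" "s = m i" unfolding P1_set_def by blast
          then show "s \<in> insert {} (A \<union> (\<lambda>z. {c,x,z}) ` range zz)"
          proof cases
            case 1 then show ?thesis by simp
          next
            case 2
            have "m i = {c,x,zz (i-1)}" using True 2(2) unfolding N_def by (metis lessI)
            then show ?thesis using 2(3) by auto
          qed
        qed
        then have False using hk nocp[OF emp] has_copy_mono by blast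
        then show ?thesis ..
      next
        case False
        then obtain k1 where "\<not> N k1" by blast
        moreover have "N 0" unfolding N_def by simp
        ultimately obtain k0 where Nk0: "N k0" and nN: "\<not> N (Suc k0)"
          using first_fail[of N k1] by blast
        have mk0: "m k0 \<noteq> (if even k0 then {c,y,zz k0} else {c,x,zz (k0-1)})"
          using Nk0 nN unfolding N_def by (metis less_Suc_eq)
        have ok0: "odd k0"
        proof (rule ccontr)
          assume "\<not> odd k0"
          then have e0: "even k0" by simp
          then have "m k0 = {c,y,zz k0}" by (rule stepN[OF _ Nk0])
          then show False using mk0 e0 by simp
        qed
        obtain p where p1: "k0 = Suc p" using ok0 by (cases k0) auto
        have p: "k0 = Suc p" "even p" using ok0 p1 by simp_all
        have mk0': "m k0 \<noteq> {c,x,zz p}" using mk0 ok0 p by simp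
        have mp: "m p = {c,y,zz p}" using Nk0 p unfolding N_def by auto
        have evS2: "even (Suc k0)" using ok0 by simp
        have Tk: "T (Suc k0) = {c,x,zz p}" unfolding T_def using p mp cxy zzA(5)[of p] by auto
        have "T (Suc k0) \<notin> A" unfolding Tk using zzA(1)[of p] by blast
        moreover have "T (Suc k0) \<notin> B" unfolding Tk using zzA(2)[of p] by blast
        moreover have "T (Suc k0) \<notin> m ` {..<Suc k0}"
        proof
          assume "T (Suc k0) \<in> m ` {..<Suc k0}"
          then obtain i where i: "i < Suc k0" "m i = {c,x,zz p}" unfolding Tk by auto
          have "i = k0 \<or> i = p \<or> i < p" using i(1) p by linarith
          moreover have "i \<noteq> k0" using i(2) mk0' by auto
          moreover have "i \<noteq> p" using i(2) mp cxy zzA(4)[of p] by (auto simp: insert_eq_iff)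
          moreover have "\<not> i < p" using i(2) zzm'[of i p] by auto
          ultimately show False by blast
        qed
        moreover have "card (T (Suc k0)) = 3" unfolding Tk using cxy zzA(3)[of p] zzA(4)[of p] by (intro card3) auto
        moreover have "2 \<le> Suc k0" using p by simp
        ultimately have mS: "m (Suc k0) = {c,x,zz p}" using strat_eq[OF evS2] Tk by simp
        define j where "j = Suc (Suc k0)"
        have P2w: "has_copy (P2_set B m j) (Khat3 4)"
        proof (rule K4_copy)
          have "{g 0, g 1, g 2, g 3, g 4, g 5} \<subseteq> \<Union>B" using K3E_verts gB by blast
          then have "zz p \<notin> {g 0, g 1, g 2, g 3, g 4, g 5}" using zzA(2)[of p] by blast
          then show "distinct [g 0, g 1, g 2, g 3, g 4, g 5, zz p]" using gd by auto
        next
          have "m p \<in> P2_set B m j" "m (Suc k0) \<in> P2_set B m j"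
            unfolding P2_set_def j_def using p evS2 by auto
          then have q1: "{c,y,zz p} \<in> P2_set B m j" and q2: "{c,x,zz p} \<in> P2_set B m j" using mp mS by auto
          have r: "{g 0, g 2, zz p} \<in> P2_set B m j \<and> {g 1, g 2, zz p} \<in> P2_set B m j"
            using gxy
          proof
            assume "g 0 = x \<and> g 1 = y"
            then have "{g 0, g 2, zz p} = {c,x,zz p}" "{g 1, g 2, zz p} = {c,y,zz p}" using g(2)
              by (simp_all add: insert_commute)
            then show ?thesis using q1 q2 by simp
          next
            assume "g 0 = y \<and> g 1 = x"
            then have "{g 0, g 2, zz p} = {c,y,zz p}" "{g 1, g 2, zz p} = {c,x,zz p}" using g(2)
              by (simp_all add: insert_commute)
            then show ?thesis using q1 q2 by simp
          qed
          have "B \<subseteq> P2_set B m j" unfolding P2_set_def by auto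
          then have "K3E (g 0) (g 1) (g 2) (g 3) (g 4) (g 5) \<subseteq> P2_set B m j" using gB by (rule subset_trans[rotated])
          then show "K4E (g 0) (g 1) (g 2) (g 3) (g 4) (g 5) (zz p) \<subseteq> P2_set B m j"
            unfolding K4E_split using r by (simp only: insert_subset)
        qed
        have P1s: "P1_set A m j \<subseteq> insert (m k0) (A \<union> (\<lambda>z. {c,x,z}) ` range zz)"
        proof
          fix s assume "s \<in> P1_set A m j"
          then consider "s \<in> A" | i where "i < j" "odd i" "s = m i" unfolding P1_set_def by blast
          then show "s \<in> insert (m k0) (A \<union> (\<lambda>z. {c,x,z}) ` range zz)"
          proof cases
            case 1 then show ?thesis by simp
          next
            case 2
            have "i = k0 \<or> i < k0" using 2(1,2) evS2 unfolding j_def by (metis less_SucE)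
            then show ?thesis
            proof
              assume "i = k0" then show ?thesis using 2 by simp
            next
              assume "i < k0"
              then have "m i = {c,x,zz (i-1)}" using Nk0 2(2) unfolding N_def by simp
              then show ?thesis using 2(3) by auto
            qed
          qed
        qed
        have lk0: "legal A B m k0" using oddL ok0 by blast
        have P1n: "\<not> has_copy (P1_set A m j) (Khat3 4)"
          using nocp[of "m k0"] lk0 P1s has_copy_mono unfolding legal_def by blast
        have "j \<le> k"
        proof (rule ccontr)
          assume "\<not> j \<le> k"
          then have "P1_set A m k \<subseteq> P1_set A m j" by (intro P1_set_mono) simp
          then show False using hk P1n has_copy_mono by blast
        qed
        then show ?thesis using P2w P1n by blast
      qed
    qed
  qed
qed

end
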